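(* Let $m\ge 2$ and let $a_1,a_2,b_1,\dots,b_m,c_1,\dots,c_m\in\mathbb{C}$ satisfy $a_1\ne a_2$, $b_i\ne b_j$ and $c_i\ne c_j$ for $i\ne j$, and $a_1+(m-1)a_2=\sum_{i=1}^m(b_i+c_i)$. Define $m\times m$ matrices by $B_{ij}=b_i+c_{m+1-i}-a_2$ for $i<j$, $B_{ii}=b_i$, $B_{ij}=0$ for $i>j$; $C_{ij}=0$ for $i<j$, $C_{ii}=c_{m+1-i}$, $C_{ij}=b_i+c_{m+1-i}-a_2$ for $i>j$; and ${\bf A}={\bf B}+{\bf C}$. For $i=1,\dots,m$ let ${\bf v}_i$ be the eigenvector of ${\bf B}$ with eigenvalue $b_i$ whose $i$-th coordinate is $1$ and whose later coordinates are $0$. Assume $b_i+c_k-a_2\ne 0$ for all $i,k$, and define a symmetric bilinear form $\langle\cdot,\cdot\rangle$ on $\mathbb{C}^m$ by $\langle{\bf v}_i,{\bf v}_j\rangle=0$ for $i\ne j$ and $$\langle{\bf v}_i,{\bf v}_i\rangle=\frac{\prod_{k=i+1}^m(b_i-b_k)}{\prod_{k=1}^{i-1}(b_i-b_k)}\cdot\frac{\prod_{k=m+2-i}^m(b_i+c_k-a_2)}{\prod_{k=1}^{m+1-i}(b_i+c_k-a_2)}.$$ Then ${\bf A}$, ${\bf B}$ and ${\bf C}$ are self-adjoint with respect to $\langle\cdot,\cdot\rangle$.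
   Context: Empty products equal $1$. Coordinates are with respect to the standard basis of $\mathbb{C}^m$. *)

theory Defs
  imports Complex_Main
begin

text \<open>Vectors in C^m are functions nat => complex (coordinates 1..m),
  m x m matrices are functions nat => nat => complex (indices 1..m).\<close>

definition Bmat :: "nat \<Rightarrow> complex \<Rightarrow> (nat \<Rightarrow> complex) \<Rightarrow> (nat \<Rightarrow> complex) \<Rightarrow> nat \<Rightarrow> nat \<Rightarrow> complex" where
  "Bmat m a2 b c i j = (if i < j then b i + c (m + 1 - i) - a2 else if i = j then b i else 0)"

definition Cmat :: "nat \<Rightarrow> complex \<Rightarrow> (nat \<Rightarrow> complex) \<Rightarrow> (nat \<Rightarrow> complex) \<Rightarrow> nat \<Rightarrow> nat \<Rightarrow> complex" where
  "Cmat m a2 b c i j = (if i < j then 0 else if i = j then c (m + 1 - i) else b i + c (m + 1 - i) - a2)"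

definition Amat :: "nat \<Rightarrow> complex \<Rightarrow> (nat \<Rightarrow> complex) \<Rightarrow> (nat \<Rightarrow> complex) \<Rightarrow> nat \<Rightarrow> nat \<Rightarrow> complex" where
  "Amat m a2 b c i j = Bmat m a2 b c i j + Cmat m a2 b c i j"

definition mulv :: "nat \<Rightarrow> (nat \<Rightarrow> nat \<Rightarrow> complex) \<Rightarrow> (nat \<Rightarrow> complex) \<Rightarrow> nat \<Rightarrow> complex" where
  "mulv m M x i = (\<Sum>j=1..m. M i j * x j)"

definition bform :: "nat \<Rightarrow> (nat \<Rightarrow> nat \<Rightarrow> complex) \<Rightarrow> (nat \<Rightarrow> complex) \<Rightarrow> (nat \<Rightarrow> complex) \<Rightarrow> complex" where
  "bform m G x y = (\<Sum>k=1..m. \<Sum>l=1..m. x k * G k l * y l)"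

definition diagval :: "nat \<Rightarrow> complex \<Rightarrow> (nat \<Rightarrow> complex) \<Rightarrow> (nat \<Rightarrow> complex) \<Rightarrow> nat \<Rightarrow> complex" where
  "diagval m a2 b c i =
     (\<Prod>k=i+1..m. b i - b k) / (\<Prod>k=1..i-1. b i - b k) *
     ((\<Prod>k=m+2-i..m. b i + c k - a2) / (\<Prod>k=1..m+1-i. b i + c k - a2))"

definition self_adjoint_wrt :: "nat \<Rightarrow> (nat \<Rightarrow> nat \<Rightarrow> complex) \<Rightarrow> (nat \<Rightarrow> nat \<Rightarrow> complex) \<Rightarrow> bool" where
  "self_adjoint_wrt m G M \<longleftrightarrow> (\<forall>x y. bform m G (mulv m M x) y = bform m G x (mulv m M y))"

end

theory Submission
  imports Defs
begin


definition dd :: "(nat \<Rightarrow> complex) \<Rightarrow> (complex \<Rightarrow> complex) \<Rightarrow> nat set \<Rightarrow> complex" where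
  "dd x f K = (\<Sum>j\<in>K. f (x j) / (\<Prod>l\<in>K-{j}. x j - x l))"

lemma dd_add: "dd x (\<lambda>t. f t + g t) K = dd x f K + dd x g K"
  by (simp add: dd_def add_divide_distrib sum.distrib)

lemma dd_diff: "dd x (\<lambda>t. f t - g t) K = dd x f K - dd x g K"
  by (simp add: dd_def diff_divide_distrib sum_subtractf)

lemma dd_cmult: "dd x (\<lambda>t. c * f t) K = c * dd x f K"
  by (simp add: dd_def sum_distrib_left)

lemma dd_factor:
  assumes "finite K" "inj_on x K" "a \<in> K"
  shows "dd x (\<lambda>t. (t - x a) * g t) K = dd x g (K - {a})"
proof -
  have "dd x (\<lambda>t. (t - x a) * g t) K = (\<Sum>j\<in>K-{a}. (x j - x a) * g (x j) / (\<Prod>l\<in>K-{j}. x j - x l))"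
    unfolding dd_def by (simp add: sum.remove[OF assms(1) assms(3)])
  also have "\<dots> = (\<Sum>j\<in>K-{a}. g (x j) / (\<Prod>l\<in>K-{a}-{j}. x j - x l))"
  proof (rule sum.cong[OF refl])
    fix j assume j: "j \<in> K - {a}"
    have "K - {j} = insert a (K - {a} - {j})" using j assms(3) by auto
    then have "(\<Prod>l\<in>K-{j}. x j - x l) = (x j - x a) * (\<Prod>l\<in>K-{a}-{j}. x j - x l)"
      using assms(1) by (simp add: prod.insert)
    moreover have "x j - x a \<noteq> 0" using assms(2,3) j by (auto simp: inj_on_def)
    ultimately show "(x j - x a) * g (x j) / (\<Prod>l\<in>K-{j}. x j - x l) = g (x j) / (\<Prod>l\<in>K-{a}-{j}. x j - x l)"
      by simp
  qed
  finally show ?thesis by (simp add: dd_def)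
qed

lemma dd_const1: assumes "card K = 1" shows "dd x (\<lambda>t. 1) K = 1"
proof -
  obtain a where "K = {a}" using assms card_1_singletonE by blast
  then show ?thesis by (simp add: dd_def)
qed

lemma dd_one: "finite K \<Longrightarrow> inj_on x K \<Longrightarrow> card K \<ge> 2 \<Longrightarrow> dd x (\<lambda>t. 1) K = 0"
proof (induction "card K" arbitrary: K rule: less_induct)
  case less
  obtain a where a: "a \<in> K" using less.prems by fastforce
  have "card (K - {a}) \<ge> 1" using less.prems a by auto
  then obtain b where b: "b \<in> K - {a}" by (metis all_not_in_conv card.empty not_one_le_zero)
  have ab: "x a - x b \<noteq> 0" using less.prems(2) a b by (auto simp: inj_on_def)
  have eq: "(\<lambda>t::complex. 1) = (\<lambda>t. inverse (x a - x b) * ((t - x b) * 1 - (t - x a) * 1))"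
    using ab by (auto simp: field_simps)
  have "dd x (\<lambda>t. 1) K = inverse (x a - x b) * (dd x (\<lambda>t. 1) (K - {b}) - dd x (\<lambda>t. 1) (K - {a}))"
    apply (subst eq)
    apply (subst dd_cmult, subst dd_diff)
    using dd_factor[OF less.prems(1,2), of b "\<lambda>t. 1"] dd_factor[OF less.prems(1,2) a, of "\<lambda>t. 1"] b
    by simp
  also have "\<dots> = 0"
  proof (cases "card K = 2")
    case True
    then have "card (K - {b}) = 1" "card (K - {a}) = 1" using a b less.prems by auto
    then show ?thesis by (simp add: dd_const1)
  next
    case False
    then have c: "card (K - {b}) \<ge> 2" "card (K - {a}) \<ge> 2" "card (K - {b}) < card K" "card (K - {a}) < card K"
      using a b less.prems by (auto simp: card_Diff_singleton)
    have "dd x (\<lambda>t. 1) (K - {b}) = 0" "dd x (\<lambda>t. 1) (K - {a}) = 0"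
      using less.hyps[OF c(3)] less.hyps[OF c(4)] c less.prems by (auto intro: inj_on_subset)
    then show ?thesis by simp
  qed
  finally show ?case .
qed

lemma dd_prod_gen:
  assumes "finite P"
  shows "\<forall>K. finite K \<longrightarrow> inj_on x K \<longrightarrow>
     (card P + 2 \<le> card K \<longrightarrow> dd x (\<lambda>t. \<Prod>p\<in>P. t + \<gamma> p) K = 0) \<and>
     (card P + 1 = card K \<longrightarrow> dd x (\<lambda>t. \<Prod>p\<in>P. t + \<gamma> p) K = 1) \<and>
     (card P = card K \<longrightarrow> dd x (\<lambda>t. \<Prod>p\<in>P. t + \<gamma> p) K = (\<Sum>l\<in>K. x l) + (\<Sum>p\<in>P. \<gamma> p))"
  using assms
proof (induction P rule: finite_induct)
  case empty
  show ?case
  proof (intro allI impI conjI)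
    fix K :: "nat set" assume K: "finite K" "inj_on x K"
    show "card {} + 2 \<le> card K \<Longrightarrow> dd x (\<lambda>t. \<Prod>p\<in>{}. t + \<gamma> p) K = 0"
      using dd_one[OF K] by simp
    show "card {} + 1 = card K \<Longrightarrow> dd x (\<lambda>t. \<Prod>p\<in>{}. t + \<gamma> p) K = 1"
      using dd_const1 by simp
    show "card {} = card K \<Longrightarrow> dd x (\<lambda>t. \<Prod>p\<in>{}. t + \<gamma> p) K = (\<Sum>l\<in>K. x l) + (\<Sum>p\<in>{}. \<gamma> p)"
      using K by (simp add: dd_def)
  qed
next
  case (insert q P)
  show ?case
  proof (intro allI impI)
    fix K :: "nat set" assume K: "finite K" "inj_on x K"
    have IHK: "(card P + 2 \<le> card K \<longrightarrow> dd x (\<lambda>t. \<Prod>p\<in>P. t + \<gamma> p) K = 0) \<and>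
     (card P + 1 = card K \<longrightarrow> dd x (\<lambda>t. \<Prod>p\<in>P. t + \<gamma> p) K = 1) \<and>
     (card P = card K \<longrightarrow> dd x (\<lambda>t. \<Prod>p\<in>P. t + \<gamma> p) K = (\<Sum>l\<in>K. x l) + (\<Sum>p\<in>P. \<gamma> p))"
      using insert.IH K by blast
    show "(card (insert q P) + 2 \<le> card K \<longrightarrow> dd x (\<lambda>t. \<Prod>p\<in>insert q P. t + \<gamma> p) K = 0) \<and>
     (card (insert q P) + 1 = card K \<longrightarrow> dd x (\<lambda>t. \<Prod>p\<in>insert q P. t + \<gamma> p) K = 1) \<and>
     (card (insert q P) = card K \<longrightarrow> dd x (\<lambda>t. \<Prod>p\<in>insert q P. t + \<gamma> p) K = (\<Sum>l\<in>K. x l) + (\<Sum>p\<in>insert q P. \<gamma> p))"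
    proof (cases "K = {}")
      case True
      then show ?thesis using insert by simp
    next
      case False
      then obtain a where a: "a \<in> K" by blast
      have IHa: "(card P + 2 \<le> card (K-{a}) \<longrightarrow> dd x (\<lambda>t. \<Prod>p\<in>P. t + \<gamma> p) (K-{a}) = 0) \<and>
       (card P + 1 = card (K-{a}) \<longrightarrow> dd x (\<lambda>t. \<Prod>p\<in>P. t + \<gamma> p) (K-{a}) = 1) \<and>
       (card P = card (K-{a}) \<longrightarrow> dd x (\<lambda>t. \<Prod>p\<in>P. t + \<gamma> p) (K-{a}) = (\<Sum>l\<in>K-{a}. x l) + (\<Sum>p\<in>P. \<gamma> p))"
        using insert.IH K by (meson finite_Diff inj_on_diff)
      have eq: "(\<lambda>t. \<Prod>p\<in>insert q P. t + \<gamma> p) =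
          (\<lambda>t. (t - x a) * (\<Prod>p\<in>P. t + \<gamma> p) + (x a + \<gamma> q) * (\<Prod>p\<in>P. t + \<gamma> p))"
        using insert.hyps by (auto simp: algebra_simps)
      have dd: "dd x (\<lambda>t. \<Prod>p\<in>insert q P. t + \<gamma> p) K =
          dd x (\<lambda>t. \<Prod>p\<in>P. t + \<gamma> p) (K - {a}) + (x a + \<gamma> q) * dd x (\<lambda>t. \<Prod>p\<in>P. t + \<gamma> p) K"
        by (subst eq, subst dd_add, subst dd_factor[OF K a], subst dd_cmult, rule refl)
      have cK: "card (K - {a}) = card K - 1" "card K \<ge> 1" using a K False by (auto simp: Suc_leI card_gt_0_iff)
      have ci: "card (insert q P) = card P + 1" using insert.hyps by simp
      have sK: "(\<Sum>l\<in>K. x l) = x a + (\<Sum>l\<in>K-{a}. x l)" using sum.remove[OF K(1) a] .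
      have sP: "(\<Sum>p\<in>insert q P. \<gamma> p) = \<gamma> q + (\<Sum>p\<in>P. \<gamma> p)" using insert.hyps by simp
      show ?thesis
        unfolding dd ci using IHK IHa cK sK sP by auto
    qed
  qed
qed



lemma mulv_cong: "(\<forall>k\<in>{1..m}. x k = y k) \<Longrightarrow> mulv m M x i = mulv m M y i"
  unfolding mulv_def by (rule sum.cong) auto

lemma bform_cong: "(\<forall>k\<in>{1..m}. x k = x' k) \<Longrightarrow> (\<forall>k\<in>{1..m}. y k = y' k) \<Longrightarrow> bform m G x y = bform m G x' y'"
  unfolding bform_def by (intro sum.cong refl) auto

lemma mulv_sum: "mulv m M (\<lambda>k. \<Sum>i\<in>I. \<alpha> i * u i k) j = (\<Sum>i\<in>I. \<alpha> i * mulv m M (u i) j)"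
  unfolding mulv_def by (simp add: sum_distrib_left algebra_simps sum.swap[of _ I])

lemma bform_sum_left: "bform m G (\<lambda>k. \<Sum>i\<in>I. \<alpha> i * u i k) y = (\<Sum>i\<in>I. \<alpha> i * bform m G (u i) y)"
  unfolding bform_def by (simp add: sum_distrib_left sum_distrib_right algebra_simps sum.swap[of _ I])

lemma bform_sum_right: "bform m G x (\<lambda>k. \<Sum>i\<in>I. \<alpha> i * u i k) = (\<Sum>i\<in>I. \<alpha> i * bform m G x (u i))"
  unfolding bform_def by (simp add: sum_distrib_left sum_distrib_right algebra_simps sum.swap[of _ I])

lemma bform_lin_left: "bform m G (\<lambda>k. \<alpha> * x k + \<beta> * y k) z = \<alpha> * bform m G x z + \<beta> * bform m G y z"
  unfolding bform_def by (simp add: sum_distrib_left algebra_simps sum.distrib)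

lemma bform_lin_right: "bform m G z (\<lambda>k. \<alpha> * x k + \<beta> * y k) = \<alpha> * bform m G z x + \<beta> * bform m G z y"
  unfolding bform_def by (simp add: sum_distrib_left algebra_simps sum.distrib)

lemma spanning:
  fixes m r :: nat and v :: "nat \<Rightarrow> nat \<Rightarrow> complex"
  assumes hv: "\<forall>i\<in>{1..m}. v i i = 1 \<and> (\<forall>k\<in>{i<..m}. v i k = 0)"
  shows "r \<le> m \<Longrightarrow> \<forall>x. (\<forall>k\<in>{1..m}. r < k \<longrightarrow> x k = 0) \<longrightarrow>
           (\<exists>\<alpha>. \<forall>k\<in>{1..m}. x k = (\<Sum>i=1..r. \<alpha> i * v i k))"
proof (induction r)
  case 0
  then show ?case by auto
next
  case (Suc r)
  show ?case
  proof (intro allI impI)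
    fix x :: "nat \<Rightarrow> complex" assume x: "\<forall>k\<in>{1..m}. Suc r < k \<longrightarrow> x k = 0"
    define x' where "x' = (\<lambda>k. x k - x (Suc r) * v (Suc r) k)"
    have hr: "v (Suc r) (Suc r) = 1" "\<forall>k\<in>{Suc r<..m}. v (Suc r) k = 0" using hv Suc.prems by auto
    have "\<forall>k\<in>{1..m}. r < k \<longrightarrow> x' k = 0"
    proof (intro ballI impI)
      fix k assume k: "k \<in> {1..m}" "r < k"
      show "x' k = 0"
      proof (cases "k = Suc r")
        case True then show ?thesis using hr by (simp add: x'_def)
      next
        case False then show ?thesis using hr x k by (simp add: x'_def)
      qed
    qed
    then obtain \<alpha> where \<alpha>: "\<forall>k\<in>{1..m}. x' k = (\<Sum>i=1..r. \<alpha> i * v i k)" using Suc.IH Suc.prems by (meson Suc_leD)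
    define \<alpha>' where "\<alpha>' = \<alpha>(Suc r := x (Suc r))"
    have "\<forall>k\<in>{1..m}. x k = (\<Sum>i=1..Suc r. \<alpha>' i * v i k)"
    proof
      fix k assume k: "k \<in> {1..m}"
      have "(\<Sum>i=1..Suc r. \<alpha>' i * v i k) = (\<Sum>i=1..r. \<alpha>' i * v i k) + x (Suc r) * v (Suc r) k"
        by (simp add: \<alpha>'_def)
      also have "(\<Sum>i=1..r. \<alpha>' i * v i k) = (\<Sum>i=1..r. \<alpha> i * v i k)"
        by (rule sum.cong) (auto simp: \<alpha>'_def)
      finally have e1: "(\<Sum>i=1..Suc r. \<alpha>' i * v i k) = (\<Sum>i=1..r. \<alpha> i * v i k) + x (Suc r) * v (Suc r) k" .
      have "x k - x (Suc r) * v (Suc r) k = (\<Sum>i=1..r. \<alpha> i * v i k)" using \<alpha> k unfolding x'_def by blast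
      then show "x k = (\<Sum>i=1..Suc r. \<alpha>' i * v i k)" unfolding e1 by (metis diff_add_cancel)
    qed
    then show "\<exists>\<alpha>. \<forall>k\<in>{1..m}. x k = (\<Sum>i=1..Suc r. \<alpha> i * v i k)" by blast
  qed
qed

lemma spanning':
  fixes m :: nat and v :: "nat \<Rightarrow> nat \<Rightarrow> complex" and x :: "nat \<Rightarrow> complex"
  assumes hv: "\<forall>i\<in>{1..m}. v i i = 1 \<and> (\<forall>k\<in>{i<..m}. v i k = 0)"
  shows "\<exists>\<alpha>. \<forall>k\<in>{1..m}. x k = (\<Sum>i=1..m. \<alpha> i * v i k)"
  using spanning[OF hv, of m] by auto

lemma selfadj_basis:
  assumes hv: "\<forall>i\<in>{1..m}. v i i = 1 \<and> (\<forall>k\<in>{i<..m}. v i k = 0)"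
    and hb: "\<forall>i\<in>{1..m}. \<forall>j\<in>{1..m}. bform m G (mulv m M (v i)) (v j) = bform m G (v i) (mulv m M (v j))"
  shows "self_adjoint_wrt m G M"
  unfolding self_adjoint_wrt_def
proof (intro allI)
  fix x y
  obtain \<alpha> where \<alpha>: "\<forall>k\<in>{1..m}. x k = (\<Sum>i=1..m. \<alpha> i * v i k)" using spanning'[OF hv] by blast
  obtain \<beta> where \<beta>: "\<forall>k\<in>{1..m}. y k = (\<Sum>i=1..m. \<beta> i * v i k)" using spanning'[OF hv] by blast
  have mx: "\<forall>k\<in>{1..m}. mulv m M x k = (\<Sum>i=1..m. \<alpha> i * mulv m M (v i) k)"
    using mulv_cong[OF \<alpha>] mulv_sum by metis
  have my: "\<forall>k\<in>{1..m}. mulv m M y k = (\<Sum>i=1..m. \<beta> i * mulv m M (v i) k)"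
    using mulv_cong[OF \<beta>] mulv_sum by metis
  have "bform m G (mulv m M x) y = (\<Sum>i=1..m. \<alpha> i * (\<Sum>j=1..m. \<beta> j * bform m G (mulv m M (v i)) (v j)))"
    by (simp add: bform_cong[OF mx \<beta>] bform_sum_left bform_sum_right)
  also have "\<dots> = (\<Sum>i=1..m. \<alpha> i * (\<Sum>j=1..m. \<beta> j * bform m G (v i) (mulv m M (v j))))"
    using hb by (intro sum.cong refl arg_cong2[where f="(*)"]) auto
  also have "\<dots> = bform m G x (mulv m M y)"
    by (simp add: bform_cong[OF \<alpha> my] bform_sum_left bform_sum_right)
  finally show "bform m G (mulv m M x) y = bform m G x (mulv m M y)" .
qed



lemma prod_reindex_rev:
  fixes f :: "nat \<Rightarrow> complex"
  assumes "1 \<le> k" "k \<le> j" "j \<le> m + 1"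
  shows "(\<Prod>l=k..j-1. f (m+1-l)) = (\<Prod>p=m+2-j..m+1-k. f p)"
  apply (rule prod.reindex_bij_witness[where i="\<lambda>p. m+1-p" and j="\<lambda>l. m+1-l"])
  using assms apply (auto simp: atLeastAtMost_iff)
  done

lemma sum_reindex_rev:
  fixes f :: "nat \<Rightarrow> complex"
  shows "(\<Sum>l=k..m. f (m+1-l)) = (\<Sum>p=1..m+1-k. f p)"
  apply (rule sum.reindex_bij_witness[where i="\<lambda>p. m+1-p" and j="\<lambda>l. m+1-l"])
  apply (auto simp: atLeastAtMost_iff)
  done

lemma cancel4: "(a::complex) \<noteq> 0 \<Longrightarrow> b \<noteq> 0 \<Longrightarrow> b / a * (a / d * (n / b)) = n / d"
  by (simp add: field_simps)

lemma divX: "(y::complex) \<noteq> 0 \<Longrightarrow> d * X / y + X = (d + y) * X / y"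
  by (simp add: field_simps)

lemma row_B: 
  assumes "k \<in> {1..m}"
  shows "mulv m (Bmat m a2 b c) x k = b k * x k + (b k + c (m+1-k) - a2) * (\<Sum>l=Suc k..m. x l)"
proof -
  define D where "D = b k + c (m+1-k) - a2"
  have "mulv m (Bmat m a2 b c) x k = (\<Sum>l=1..m. (if l \<in> {l. k < l} then D * x l else 0) + (if l = k then b k * x l else 0))"
    unfolding mulv_def D_def by (rule sum.cong) (auto simp: Bmat_def)
  also have "\<dots> = (\<Sum>l=1..m. (if l \<in> {l. k < l} then D * x l else 0)) + (\<Sum>l=1..m. (if l = k then b k * x l else 0))"
    by (rule sum.distrib)
  also have "(\<Sum>l=1..m. (if l = k then b k * x l else 0)) = b k * x k"
    using assms by (subst sum.delta) auto
  also have "(\<Sum>l=1..m. (if l \<in> {l. k < l} then D * x l else 0)) = (\<Sum>l\<in>{1..m} \<inter> {l. k < l}. D * x l)"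
    by (rule sum.inter_restrict[symmetric]) auto
  also have "{1..m} \<inter> {l. k < l} = {Suc k..m}" using assms by auto
  finally show ?thesis by (simp add: sum_distrib_left D_def)
qed

lemma row_BC:
  assumes "k \<in> {1..m}"
  shows "mulv m (Bmat m a2 b c) x k + mulv m (Cmat m a2 b c) x k = a2 * x k + (b k + c (m+1-k) - a2) * (\<Sum>l=1..m. x l)"
proof -
  have "mulv m (Bmat m a2 b c) x k + mulv m (Cmat m a2 b c) x k = (\<Sum>l=1..m. (b k + c (m+1-k) - a2) * x l + (if l = k then a2 * x l else 0))"
    unfolding mulv_def sum.distrib[symmetric] by (rule sum.cong) (auto simp: Bmat_def Cmat_def algebra_simps)
  also have "\<dots> = a2 * x k + (b k + c (m+1-k) - a2) * (\<Sum>l=1..m. x l)"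
    using assms by (simp add: sum.distrib sum_distrib_left)
  finally show ?thesis .
qed

context
  fixes m :: nat and a2 :: complex and b c :: "nat \<Rightarrow> complex" and v :: "nat \<Rightarrow> nat \<Rightarrow> complex"
  assumes inj: "inj_on b {1..m}"
    and ne: "\<forall>i\<in>{1..m}. \<forall>k\<in>{1..m}. b i + c k - a2 \<noteq> 0"
    and eig: "\<forall>i\<in>{1..m}. (\<forall>k\<in>{1..m}. mulv m (Bmat m a2 b c) (v i) k = b i * v i k)
                      \<and> v i i = 1 \<and> (\<forall>k\<in>{i<..m}. v i k = 0)"
begin

definition pf :: "nat \<Rightarrow> nat \<Rightarrow> complex" where
  "pf j k = (\<Prod>l=k..j-1. (b j + c (m+1-l) - a2) / (b j - b l))"

lemma bdiff: "j \<in> {1..m} \<Longrightarrow> l \<in> {1..m} \<Longrightarrow> j \<noteq> l \<Longrightarrow> b j - b l \<noteq> 0"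
  using inj_onD[OF inj] by (metis eq_iff_diff_eq_0)

lemma S_zero: assumes "j \<in> {1..m}" "j < k" shows "(\<Sum>l=k..m. v j l) = 0"
proof (rule sum.neutral, rule ballI)
  fix l assume l: "l \<in> {k..m}"
  have "\<forall>k\<in>{j<..m}. v j k = 0" using eig assms(1) by blast
  then show "v j l = 0" using l assms(2) by simp
qed

lemma S_formula:
  assumes j: "j \<in> {1..m}" and k: "1 \<le> k" "k \<le> j"
  shows "(\<Sum>l=k..m. v j l) = pf j k"
  using k(2)
proof (induction k rule: inc_induct)
  case base
  have "(\<Sum>l=j..m. v j l) = v j j + (\<Sum>l=Suc j..m. v j l)" using j by (intro sum.atLeast_Suc_atMost) auto
  moreover have "v j j = 1" using eig j by blast
  moreover have "pf j j = 1" using j by (simp add: pf_def)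
  ultimately show ?case using S_zero[OF j, of "Suc j"] by simp
next
  case (step n)
  have n: "n \<in> {1..m}" using step.hyps k j by auto
  define X where "X = (\<Sum>l=Suc n..m. v j l)"
  have X: "X = pf j (Suc n)" using step.IH X_def by simp
  have Sn: "(\<Sum>l=n..m. v j l) = v j n + X" unfolding X_def using n by (intro sum.atLeast_Suc_atMost) auto
  have e1: "mulv m (Bmat m a2 b c) (v j) n = b j * v j n" using eig j n by blast
  have ev: "b n * v j n + (b n + c (m+1-n) - a2) * X = b j * v j n"
    using row_B[OF n, of a2 b c "v j"] e1 unfolding X_def by simp
  have bd: "b j - b n \<noteq> 0" using bdiff[OF j n] step.hyps by auto
  have pfn: "pf j n = (b j + c (m+1-n) - a2) / (b j - b n) * pf j (Suc n)"
    unfolding pf_def using step.hyps by (intro prod.atLeast_Suc_atMost) auto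
  have vn: "v j n = (b n + c (m+1-n) - a2) * X / (b j - b n)"
    using ev bd by (simp add: field_simps)
  have "v j n + X = ((b n + c (m+1-n) - a2) + (b j - b n)) * X / (b j - b n)"
    unfolding vn by (rule divX[OF bd])
  also have "(b n + c (m+1-n) - a2) + (b j - b n) = b j + c (m+1-n) - a2" by simp
  finally have fin: "v j n + X = (b j + c (m+1-n) - a2) * X / (b j - b n)" .
  show ?case unfolding Sn pfn X[symmetric] times_divide_eq_left by (rule fin)
qed

definition beta :: "nat \<Rightarrow> complex" where
  "beta j = (\<Prod>p=1..m+1-j. b j + c p - a2) / (\<Prod>l=j+1..m. b j - b l)"

lemma beta_pf:
  assumes k: "1 \<le> k" "k \<le> j" and j: "j \<le> m"
  shows "beta j * pf j k = (\<Prod>p\<in>{1..m+1-k}. b j + (c p - a2)) / (\<Prod>l\<in>{k..m}-{j}. b j - b l)"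
proof -
  have pf: "pf j k = (\<Prod>l=k..j-1. b j + c (m+1-l) - a2) / (\<Prod>l=k..j-1. b j - b l)"
    unfolding pf_def by (rule prod_dividef)
  have r: "(\<Prod>l=k..j-1. b j + c (m+1-l) - a2) = (\<Prod>p=m+2-j..m+1-k. b j + c p - a2)"
    using prod_reindex_rev[of k j m "\<lambda>p. b j + c p - a2"] k j by simp
  have u1: "{1..m+1-k} = {1..m+1-j} \<union> {m+2-j..m+1-k}" using k j by auto
  have n: "(\<Prod>p=1..m+1-j. b j + c p - a2) * (\<Prod>p=m+2-j..m+1-k. b j + c p - a2) = (\<Prod>p\<in>{1..m+1-k}. b j + (c p - a2))"
    unfolding u1 by (subst prod.union_disjoint) (auto simp: add_diff_eq)
  have u2: "{k..m}-{j} = {j+1..m} \<union> {k..j-1}" using k j by auto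
  have d: "(\<Prod>l=j+1..m. b j - b l) * (\<Prod>l=k..j-1. b j - b l) = (\<Prod>l\<in>{k..m}-{j}. b j - b l)"
    unfolding u2 by (subst prod.union_disjoint) auto
  show ?thesis unfolding beta_def pf r n[symmetric] d[symmetric] by (rule times_divide_times_eq)
qed

lemma S_beta_sum:
  assumes k: "1 \<le> k" "k \<le> m + 1"
  shows "(\<Sum>j=1..m. beta j * (\<Sum>l=k..m. v j l)) = (\<Sum>l=k..m. b l + c (m+1-l) - a2)"
proof -
  have "(\<Sum>j=1..m. beta j * (\<Sum>l=k..m. v j l)) = (\<Sum>j\<in>{k..m}. beta j * pf j k)"
  proof (rule sum.mono_neutral_cong_right)
    show "{k..m} \<subseteq> {1..m}" using k by auto
    show "\<forall>i\<in>{1..m} - {k..m}. beta i * sum (v i) {k..m} = 0"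
      using S_zero by auto
    show "beta x * sum (v x) {k..m} = beta x * pf x k" if "x \<in> {k..m}" for x
      using S_formula[of x k] that k by auto
  qed simp
  also have "\<dots> = (\<Sum>j\<in>{k..m}. (\<Prod>p\<in>{1..m+1-k}. b j + (c p - a2)) / (\<Prod>l\<in>{k..m}-{j}. b j - b l))"
    using beta_pf k by (intro sum.cong) auto
  also have "\<dots> = dd b (\<lambda>t. \<Prod>p\<in>{1..m+1-k}. t + (c p - a2)) {k..m}"
    unfolding dd_def by simp
  also have "\<dots> = (\<Sum>l\<in>{k..m}. b l) + (\<Sum>p\<in>{1..m+1-k}. c p - a2)"
  proof -
    have "inj_on b {k..m}" by (rule inj_on_subset[OF inj]) (use k in auto)
    moreover have "card {1..m+1-k} = card {k..m}" by simp
    moreover note H = dd_prod_gen[of "{1..m+1-k}" b "\<lambda>p. c p - a2", THEN spec, of "{k..m}"]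
    ultimately show ?thesis by (meson finite_atLeastAtMost)
  qed
  also have "(\<Sum>p\<in>{1..m+1-k}. c p - a2) = (\<Sum>l=k..m. c (m+1-l) - a2)"
    using sum_reindex_rev[where f="\<lambda>p. c p - a2" and k=k and m=m] by simp
  also have "(\<Sum>l\<in>{k..m}. b l) + (\<Sum>l=k..m. c (m+1-l) - a2) = (\<Sum>l=k..m. b l + c (m+1-l) - a2)"
    by (simp add: sum.distrib[symmetric] add_diff_eq)
  finally show ?thesis .
qed

lemma d_expansion:
  assumes k: "k \<in> {1..m}"
  shows "(\<Sum>j=1..m. beta j * v j k) = b k + c (m+1-k) - a2"
proof -
  have vk: "v j k = (\<Sum>l=k..m. v j l) - (\<Sum>l=Suc k..m. v j l)" for j
  proof -
    have "(\<Sum>l=k..m. v j l) = v j k + (\<Sum>l=Suc k..m. v j l)" using k by (intro sum.atLeast_Suc_atMost) auto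
    then show ?thesis by simp
  qed
  have "(\<Sum>j=1..m. beta j * v j k) = (\<Sum>j=1..m. beta j * (\<Sum>l=k..m. v j l)) - (\<Sum>j=1..m. beta j * (\<Sum>l=Suc k..m. v j l))"
    unfolding vk by (simp add: right_diff_distrib sum_subtractf)
  also have "\<dots> = (\<Sum>l=k..m. b l + c (m+1-l) - a2) - (\<Sum>l=Suc k..m. b l + c (m+1-l) - a2)"
    using S_beta_sum[of k] S_beta_sum[of "Suc k"] k by simp
  also have "(\<Sum>l=k..m. b l + c (m+1-l) - a2) = (b k + c (m+1-k) - a2) + (\<Sum>l=Suc k..m. b l + c (m+1-l) - a2)"
    using k by (intro sum.atLeast_Suc_atMost) auto
  finally show ?thesis by simp
qed

lemma beta_diag:
  assumes j: "j \<in> {1..m}"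
  shows "beta j * diagval m a2 b c j = (\<Sum>l=1..m. v j l)"
proof -
  have N1: "(\<Prod>k=j+1..m. b j - b k) \<noteq> 0" using bdiff j by (subst prod_zero_iff) auto
  have "\<forall>p\<in>{1..m+1-j}. b j + c p - a2 \<noteq> 0"
  proof
    fix p assume "p \<in> {1..m+1-j}"
    then have "p \<in> {1..m}" using j by auto
    then show "b j + c p - a2 \<noteq> 0" using ne j by blast
  qed
  then have D2: "(\<Prod>k=1..m+1-j. b j + c k - a2) \<noteq> 0" by (subst prod_zero_iff) blast+
  have r: "(\<Prod>l=1..j-1. b j + c (m+1-l) - a2) = (\<Prod>p=m+2-j..m. b j + c p - a2)"
    using prod_reindex_rev[of 1 j m "\<lambda>p. b j + c p - a2"] j by simp
  have "(\<Sum>l=1..m. v j l) = pf j 1" using S_formula[of j 1] j by auto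
  also have "\<dots> = (\<Prod>l=1..j-1. b j + c (m+1-l) - a2) / (\<Prod>l=1..j-1. b j - b l)"
    unfolding pf_def by (rule prod_dividef)
  finally have S1: "(\<Sum>l=1..m. v j l) = (\<Prod>p=m+2-j..m. b j + c p - a2) / (\<Prod>l=1..j-1. b j - b l)"
    unfolding r .
  show ?thesis unfolding S1 beta_def diagval_def by (rule cancel4[OF N1 D2])
qed

lemma hv: "\<forall>i\<in>{1..m}. v i i = 1 \<and> (\<forall>k\<in>{i<..m}. v i k = 0)"
  using eig by blast

lemma eigv: "i \<in> {1..m} \<Longrightarrow> k \<in> {1..m} \<Longrightarrow> mulv m (Bmat m a2 b c) (v i) k = b i * v i k"
  using eig by blast

context
  fixes G :: "nat \<Rightarrow> nat \<Rightarrow> complex"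
  assumes hG: "\<forall>i\<in>{1..m}. \<forall>j\<in>{1..m}. bform m G (v i) (v j) = (if i = j then diagval m a2 b c i else 0)"
begin

lemma bform_d_left:
  assumes j: "j \<in> {1..m}"
  shows "bform m G (\<lambda>k. b k + c (m+1-k) - a2) (v j) = (\<Sum>l=1..m. v j l)"
proof -
  have "bform m G (\<lambda>k. b k + c (m+1-k) - a2) (v j) = bform m G (\<lambda>k. \<Sum>i=1..m. beta i * v i k) (v j)"
    using d_expansion by (intro bform_cong) auto
  also have "\<dots> = (\<Sum>i=1..m. beta i * bform m G (v i) (v j))" by (rule bform_sum_left)
  also have "\<dots> = (\<Sum>i=1..m. (if i = j then beta j * diagval m a2 b c j else 0))"
    using hG j by (intro sum.cong) auto
  also have "\<dots> = beta j * diagval m a2 b c j" using j by (subst sum.delta) auto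
  also have "\<dots> = (\<Sum>l=1..m. v j l)" by (rule beta_diag[OF j])
  finally show ?thesis .
qed

lemma bform_d_right:
  assumes j: "j \<in> {1..m}"
  shows "bform m G (v j) (\<lambda>k. b k + c (m+1-k) - a2) = (\<Sum>l=1..m. v j l)"
proof -
  have "bform m G (v j) (\<lambda>k. b k + c (m+1-k) - a2) = bform m G (v j) (\<lambda>k. \<Sum>i=1..m. beta i * v i k)"
    using d_expansion by (intro bform_cong) auto
  also have "\<dots> = (\<Sum>i=1..m. beta i * bform m G (v j) (v i))" by (rule bform_sum_right)
  also have "\<dots> = (\<Sum>i=1..m. (if i = j then beta j * diagval m a2 b c j else 0))"
    using hG j by (intro sum.cong) auto
  also have "\<dots> = beta j * diagval m a2 b c j" using j by (subst sum.delta) auto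
  also have "\<dots> = (\<Sum>l=1..m. v j l)" by (rule beta_diag[OF j])
  finally show ?thesis .
qed

lemma C_vec:
  assumes i: "i \<in> {1..m}" and k: "k \<in> {1..m}"
  shows "mulv m (Cmat m a2 b c) (v i) k = (a2 - b i) * v i k + (\<Sum>l=1..m. v i l) * (b k + c (m+1-k) - a2)"
  using row_BC[OF k, of a2 b c "v i"] eigv[OF i k] by (simp add: algebra_simps)

lemma selfadj_B: "self_adjoint_wrt m G (Bmat m a2 b c)"
proof (rule selfadj_basis[OF hv], intro ballI)
  fix i j assume i: "i \<in> {1..m}" and j: "j \<in> {1..m}"
  have "bform m G (mulv m (Bmat m a2 b c) (v i)) (v j) = bform m G (\<lambda>k. b i * v i k + 0 * v i k) (v j)"
    using eigv[OF i] by (intro bform_cong) auto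
  also have "\<dots> = b i * bform m G (v i) (v j)" by (simp only: bform_lin_left) simp
  finally have L: "bform m G (mulv m (Bmat m a2 b c) (v i)) (v j) = b i * bform m G (v i) (v j)" .
  have "bform m G (v i) (mulv m (Bmat m a2 b c) (v j)) = bform m G (v i) (\<lambda>k. b j * v j k + 0 * v j k)"
    using eigv[OF j] by (intro bform_cong) auto
  also have "\<dots> = b j * bform m G (v i) (v j)" by (simp only: bform_lin_right) simp
  finally have R: "bform m G (v i) (mulv m (Bmat m a2 b c) (v j)) = b j * bform m G (v i) (v j)" .
  show "bform m G (mulv m (Bmat m a2 b c) (v i)) (v j) = bform m G (v i) (mulv m (Bmat m a2 b c) (v j))"
    unfolding L R using hG i j by auto
qed

lemma selfadj_C: "self_adjoint_wrt m G (Cmat m a2 b c)"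
proof (rule selfadj_basis[OF hv], intro ballI)
  fix i j assume i: "i \<in> {1..m}" and j: "j \<in> {1..m}"
  have "bform m G (mulv m (Cmat m a2 b c) (v i)) (v j) =
        bform m G (\<lambda>k. (a2 - b i) * v i k + (\<Sum>l=1..m. v i l) * (b k + c (m+1-k) - a2)) (v j)"
    using C_vec[OF i] by (intro bform_cong) auto
  also have "\<dots> = (a2 - b i) * bform m G (v i) (v j) + (\<Sum>l=1..m. v i l) * (\<Sum>l=1..m. v j l)"
    by (simp only: bform_lin_left bform_d_left[OF j])
  finally have L: "bform m G (mulv m (Cmat m a2 b c) (v i)) (v j) = (a2 - b i) * bform m G (v i) (v j) + (\<Sum>l=1..m. v i l) * (\<Sum>l=1..m. v j l)" .
  have "bform m G (v i) (mulv m (Cmat m a2 b c) (v j)) =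
        bform m G (v i) (\<lambda>k. (a2 - b j) * v j k + (\<Sum>l=1..m. v j l) * (b k + c (m+1-k) - a2))"
    using C_vec[OF j] by (intro bform_cong) auto
  also have "\<dots> = (a2 - b j) * bform m G (v i) (v j) + (\<Sum>l=1..m. v j l) * (\<Sum>l=1..m. v i l)"
    by (simp only: bform_lin_right bform_d_right[OF i])
  finally have R: "bform m G (v i) (mulv m (Cmat m a2 b c) (v j)) = (a2 - b j) * bform m G (v i) (v j) + (\<Sum>l=1..m. v j l) * (\<Sum>l=1..m. v i l)" .
  show "bform m G (mulv m (Cmat m a2 b c) (v i)) (v j) = bform m G (v i) (mulv m (Cmat m a2 b c) (v j))"
    unfolding L R using hG i j by (auto simp: mult.commute)
qed

lemma selfadj_A: "self_adjoint_wrt m G (Amat m a2 b c)"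
  unfolding self_adjoint_wrt_def
proof (intro allI)
  fix x y
  have mA: "mulv m (Amat m a2 b c) z = (\<lambda>k. 1 * mulv m (Bmat m a2 b c) z k + 1 * mulv m (Cmat m a2 b c) z k)" for z
    unfolding mulv_def Amat_def by (auto simp: sum.distrib distrib_right)
  show "bform m G (mulv m (Amat m a2 b c) x) y = bform m G x (mulv m (Amat m a2 b c) y)"
    unfolding mA bform_lin_left bform_lin_right
    using selfadj_B selfadj_C unfolding self_adjoint_wrt_def by simp
qed

end

end

theorem theorem2p6:
  fixes m :: nat and a1 a2 :: complex and b c :: "nat \<Rightarrow> complex"
    and v :: "nat \<Rightarrow> nat \<Rightarrow> complex" and G :: "nat \<Rightarrow> nat \<Rightarrow> complex"
  assumes "m \<ge> 2"
    and "a1 \<noteq> a2"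
    and "inj_on b {1..m}"
    and "inj_on c {1..m}"
    and "a1 + of_nat (m - 1) * a2 = (\<Sum>i=1..m. b i + c i)"
    and "\<forall>i\<in>{1..m}. \<forall>k\<in>{1..m}. b i + c k - a2 \<noteq> 0"
    and "\<forall>i\<in>{1..m}. (\<forall>k\<in>{1..m}. mulv m (Bmat m a2 b c) (v i) k = b i * v i k)
                      \<and> v i i = 1 \<and> (\<forall>k\<in>{i<..m}. v i k = 0)"
    and "\<forall>i\<in>{1..m}. \<forall>j\<in>{1..m}.
           bform m G (v i) (v j) = (if i = j then diagval m a2 b c i else 0)"
  shows "self_adjoint_wrt m G (Amat m a2 b c) \<and> self_adjoint_wrt m G (Bmat m a2 b c)
         \<and> self_adjoint_wrt m G (Cmat m a2 b c)"
  using selfadj_A[OF assms(3,6,7,8)] selfadj_B[OF assms(3,6,7,8)] selfadj_C[OF assms(3,6,7,8)] by blast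

end
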